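(* Consider the channel $\mathbf r=\mathbf s+\sigma_0\boldsymbol\eta$ in $\mathbb R^n$, where the normalized noise $\boldsymbol\eta$ has density $\int_0^\infty(2\pi\sigma^2)^{-n/2}\exp\{-|\mathbf x|^2/(2\sigma^2)\}f(\sigma)\,d\sigma$ for a univariate probability density $f(\sigma)$ with $f(\sigma)=0$ for $\sigma\notin[\sigma_1,\sigma_2]$, and let $\gamma=1/\sigma_0^2$. For any decoder with center-convex decision regions (e.g. the min-distance decoder, for any constellation, bit mapping and coding), the pairwise error probabilities $\Pr\{\mathbf s_i\to\mathbf s_j\}$, the SER and the BER are convex functions of $\gamma$ in the high-SNR/low-noise regime $d_{\min}^2\ge(n+\sqrt{2n})(\sigma_0\sigma_2)^2$.
   Context: Setting: $\mathbf s\in\{\mathbf s_1,\dots,\mathbf s_M\}$ with priors $\pi_k$; the decoder has pairwise disjoint decision regions $\Omega_k$ independent of $\gamma$ (output $\mathbf s_k$ if $\mathbf r\in\Omega_k$, error if in none); $\Omega_k$ is center-convex if for every $\mathbf x\in\Omega_k$ the segment from $\mathbf s_k$ to $\mathbf x$ lies in $\Omega_k$. PEP: $\Pr\{\mathbf s_i\to\mathbf s_j\}=\Pr[\mathbf r\in\Omega_j\mid\mathbf s=\mathbf s_i]$, $i\neq j$. SER: $P_e=\sum_i\pi_i(1-\Pr[\mathbf r\in\Omega_i\mid\mathbf s=\mathbf s_i])$. BER: $\sum_i\sum_{j\ne i}\frac{h_{ij}}{\log_2M}\pi_i\Pr\{\mathbf s_i\to\mathbf s_j\}$, where $h_{ij}$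 is the Hamming distance between the bit labels of $\mathbf s_i$ and $\mathbf s_j$. $d_{\min}=\min_k d_{\min,k}$, where $d_{\min,k}$ is the minimum distance from $\mathbf s_k$ to the boundary of $\Omega_k$. Convexity in the stated regime means nonnegative second derivative in $\gamma$ for all $\gamma\ge(n+\sqrt{2n})\sigma_2^2/d_{\min}^2$. *)

theory Defs
  imports "HOL-Analysis.Analysis"
begin

definition noise_density :: "(real \<Rightarrow> real) \<Rightarrow> real ^ 'n \<Rightarrow> real" where
  "noise_density f x =
     (LINT \<sigma>:{0<..}|lborel.
        (2 * pi * \<sigma>\<^sup>2) powr (- real CARD('n) / 2) * exp (- (norm x)\<^sup>2 / (2 * \<sigma>\<^sup>2)) * f \<sigma>)"

text \<open>Pr[r in A | s] for r = s + sigma0 eta, with gamma = 1/sigma0^2 (so sigma0 = 1/sqrt gamma);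
  the density of r is sigma0^(-n) g((r - s)/sigma0).\<close>
definition prob_in :: "(real \<Rightarrow> real) \<Rightarrow> real ^ 'n \<Rightarrow> (real ^ 'n) set \<Rightarrow> real \<Rightarrow> real" where
  "prob_in f s A \<gamma> =
     (LINT r:A|lborel. (sqrt \<gamma>) ^ CARD('n) * noise_density f (sqrt \<gamma> *\<^sub>R (r - s)))"

definition pep :: "(real \<Rightarrow> real) \<Rightarrow> (nat \<Rightarrow> real ^ 'n) \<Rightarrow> (nat \<Rightarrow> (real ^ 'n) set)
     \<Rightarrow> nat \<Rightarrow> nat \<Rightarrow> real \<Rightarrow> real" where
  "pep f s \<Omega> i j \<gamma> = prob_in f (s i) (\<Omega> j) \<gamma>"

definition ser :: "(real \<Rightarrow> real) \<Rightarrow> nat \<Rightarrow> (nat \<Rightarrow> real) \<Rightarrow> (nat \<Rightarrow> real ^ 'n)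
     \<Rightarrow> (nat \<Rightarrow> (real ^ 'n) set) \<Rightarrow> real \<Rightarrow> real" where
  "ser f M \<pi> s \<Omega> \<gamma> = (\<Sum>i<M. \<pi> i * (1 - prob_in f (s i) (\<Omega> i) \<gamma>))"

definition hamming :: "bool list \<Rightarrow> bool list \<Rightarrow> nat" where
  "hamming u v = card {b. b < length u \<and> u ! b \<noteq> v ! b}"

definition ber :: "(real \<Rightarrow> real) \<Rightarrow> nat \<Rightarrow> (nat \<Rightarrow> real) \<Rightarrow> (nat \<Rightarrow> bool list)
     \<Rightarrow> (nat \<Rightarrow> real ^ 'n) \<Rightarrow> (nat \<Rightarrow> (real ^ 'n) set) \<Rightarrow> real \<Rightarrow> real" where
  "ber f M \<pi> lab s \<Omega> \<gamma> =
     (\<Sum>i<M. \<Sum>j\<in>{..<M} - {i}.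
        real (hamming (lab i) (lab j)) / log 2 (real M) * \<pi> i * pep f s \<Omega> i j \<gamma>)"

definition center_convex :: "real ^ 'n \<Rightarrow> (real ^ 'n) set \<Rightarrow> bool" where
  "center_convex c A \<longleftrightarrow> (\<forall>x\<in>A. closed_segment c x \<subseteq> A)"

definition dmin :: "nat \<Rightarrow> (nat \<Rightarrow> real ^ 'n) \<Rightarrow> (nat \<Rightarrow> (real ^ 'n) set) \<Rightarrow> real" where
  "dmin M s \<Omega> = Min ((\<lambda>k. infdist (s k) (frontier (\<Omega> k))) ` {..<M})"

definition convex_in_regime :: "(real \<Rightarrow> real) \<Rightarrow> real set \<Rightarrow> bool" where
  "convex_in_regime P S \<longleftrightarrow>
     (\<exists>P' P''. \<forall>\<gamma>\<in>S. (P has_real_derivative P' \<gamma>) (at \<gamma>) \<and>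
                      (P' has_real_derivative P'' \<gamma>) (at \<gamma>) \<and> P'' \<gamma> \<ge> 0)"

end

theory Submission
  imports Defs "HOL-Probability.Distributions"
begin

lemma mvt_bound_aux:
  fixes u u' :: "real \<Rightarrow> real"
  assumes "0 < \<delta>" "\<bar>g - \<gamma>\<bar> < \<delta>"
    and "\<And>z. \<bar>z - \<gamma>\<bar> < \<delta> \<Longrightarrow> (u has_real_derivative u' z) (at z)"
    and "\<And>z. \<bar>z - \<gamma>\<bar> < \<delta> \<Longrightarrow> \<bar>u' z\<bar> \<le> B"
  shows "\<bar>u g - u \<gamma>\<bar> \<le> B * \<bar>g - \<gamma>\<bar>"
proof -
  have "norm (u g - u \<gamma>) \<le> B * norm (g - \<gamma>)"
  proof (rule field_differentiable_bound[where S="ball \<gamma> \<delta>" and f'=u'])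
    show "convex (ball \<gamma> \<delta>)" by simp
    fix z assume "z \<in> ball \<gamma> \<delta>"
    then have z: "\<bar>z - \<gamma>\<bar> < \<delta>" by (simp add: dist_real_def abs_minus_commute)
    show "(u has_field_derivative u' z) (at z within ball \<gamma> \<delta>)"
      using assms(3)[OF z] by (rule has_field_derivative_at_within)
    show "norm (u' z) \<le> B" using assms(4)[OF z] by simp
  next
    show "g \<in> ball \<gamma> \<delta>" using assms(2) by (simp add: dist_real_def abs_minus_commute)
    show "\<gamma> \<in> ball \<gamma> \<delta>" using assms(1) by simp
  qed
  then show ?thesis by simp
qed

lemma diff_under_integral:
  fixes \<phi> \<phi>' :: "real \<Rightarrow> 'a \<Rightarrow> real" and B :: "'a \<Rightarrow> real"
  assumes \<delta>: "0 < \<delta>"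
    and meas: "\<And>g. \<bar>g - \<gamma>\<bar> < \<delta> \<Longrightarrow> \<phi> g \<in> borel_measurable M"
    and meas': "\<phi>' \<gamma> \<in> borel_measurable M"
    and int: "integrable M (\<phi> \<gamma>)"
    and der: "\<And>g x. \<bar>g - \<gamma>\<bar> < \<delta> \<Longrightarrow> x \<in> space M \<Longrightarrow> ((\<lambda>g. \<phi> g x) has_real_derivative \<phi>' g x) (at g)"
    and bnd: "\<And>g x. \<bar>g - \<gamma>\<bar> < \<delta> \<Longrightarrow> x \<in> space M \<Longrightarrow> \<bar>\<phi>' g x\<bar> \<le> B x"
    and intB: "integrable M B"
  shows diff_under_integral_int: "\<And>g. \<bar>g - \<gamma>\<bar> < \<delta> \<Longrightarrow> integrable M (\<phi> g)"
    and diff_under_integral_deriv: "((\<lambda>g. \<integral>x. \<phi> g x \<partial>M) has_real_derivative (\<integral>x. \<phi>' \<gamma> x \<partial>M)) (at \<gamma>)"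
proof -
  have mv: "\<bar>\<phi> g x - \<phi> \<gamma> x\<bar> \<le> B x * \<bar>g - \<gamma>\<bar>" if "\<bar>g - \<gamma>\<bar> < \<delta>" "x \<in> space M" for g x
    using mvt_bound_aux[OF \<delta> that(1), of "\<lambda>g. \<phi> g x" "\<lambda>g. \<phi>' g x" "B x"] der bnd that(2) by blast
  show intg: "integrable M (\<phi> g)" if g: "\<bar>g - \<gamma>\<bar> < \<delta>" for g
  proof (rule Bochner_Integration.integrable_bound[where f="\<lambda>x. \<bar>\<phi> \<gamma> x\<bar> + \<delta> * B x"])
    show "integrable M (\<lambda>x. \<bar>\<phi> \<gamma> x\<bar> + \<delta> * B x)" using int intB by auto
    show "\<phi> g \<in> borel_measurable M" using meas g by blast
    show "AE x in M. norm (\<phi> g x) \<le> norm (\<bar>\<phi> \<gamma> x\<bar> + \<delta> * B x)"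
    proof (rule AE_I2)
      fix x assume x: "x \<in> space M"
      have B0: "0 \<le> B x" using bnd[of \<gamma> x] \<delta> x by auto
      have "\<bar>\<phi> g x\<bar> \<le> \<bar>\<phi> \<gamma> x\<bar> + B x * \<bar>g - \<gamma>\<bar>" using mv[OF g x] by linarith
      also have "\<dots> \<le> \<bar>\<phi> \<gamma> x\<bar> + \<delta> * B x" using mult_left_mono[OF less_imp_le[OF g] B0] by (simp add: mult.commute)
      finally show "norm (\<phi> g x) \<le> norm (\<bar>\<phi> \<gamma> x\<bar> + \<delta> * B x)" using B0 \<delta> by simp
    qed
  qed
  show "((\<lambda>g. \<integral>x. \<phi> g x \<partial>M) has_real_derivative (\<integral>x. \<phi>' \<gamma> x \<partial>M)) (at \<gamma>)"
    unfolding DERIV_def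
  proof (subst tendsto_at_iff_sequentially, intro allI impI)
    fix X :: "nat \<Rightarrow> real"
    assume X: "\<forall>i. X i \<in> UNIV - {0}" and X0: "X \<longlonglongrightarrow> 0"
    obtain N where N: "\<And>i. N \<le> i \<Longrightarrow> \<bar>X i\<bar> < \<delta>"
      using X0 \<delta> unfolding LIMSEQ_iff by (metis diff_zero real_norm_def)
    define Y where "Y i = X (i + N)" for i
    have Y: "\<bar>Y i\<bar> < \<delta>" "Y i \<noteq> 0" for i using N X by (auto simp: Y_def)
    have Y0: "Y \<longlonglongrightarrow> 0" unfolding Y_def using X0 by (rule LIMSEQ_ignore_initial_segment)
    have "(\<lambda>i. ((\<integral>x. \<phi> (\<gamma> + Y i) x \<partial>M) - (\<integral>x. \<phi> \<gamma> x \<partial>M)) / Y i) \<longlonglongrightarrow> (\<integral>x. \<phi>' \<gamma> x \<partial>M)"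
    proof -
      have eq: "((\<integral>x. \<phi> (\<gamma> + Y i) x \<partial>M) - (\<integral>x. \<phi> \<gamma> x \<partial>M)) / Y i
          = (\<integral>x. (\<phi> (\<gamma> + Y i) x - \<phi> \<gamma> x) / Y i \<partial>M)" for i
      proof -
        have "integrable M (\<phi> (\<gamma> + Y i))" using intg[of "\<gamma> + Y i"] Y(1)[of i] by simp
        then show ?thesis using int by (simp add: Bochner_Integration.integral_diff)
      qed
      have "(\<lambda>i. \<integral>x. (\<phi> (\<gamma> + Y i) x - \<phi> \<gamma> x) / Y i \<partial>M) \<longlonglongrightarrow> (\<integral>x. \<phi>' \<gamma> x \<partial>M)"
      proof (rule integral_dominated_convergence[where w=B])
        show "\<phi>' \<gamma> \<in> borel_measurable M" by (rule meas')
        show "(\<lambda>x. (\<phi> (\<gamma> + Y i) x - \<phi> \<gamma> x) / Y i) \<in> borel_measurable M" for i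
          using meas[of "\<gamma> + Y i"] meas[of \<gamma>] Y(1)[of i] \<delta> by auto
        show "integrable M B" by (rule intB)
        show "AE x in M. (\<lambda>i. (\<phi> (\<gamma> + Y i) x - \<phi> \<gamma> x) / Y i) \<longlonglongrightarrow> \<phi>' \<gamma> x"
        proof (rule AE_I2)
          fix x assume x: "x \<in> space M"
          have "((\<lambda>h. (\<phi> (\<gamma> + h) x - \<phi> \<gamma> x) / h) \<longlongrightarrow> \<phi>' \<gamma> x) (at 0)"
            using der[of \<gamma> x] x \<delta> unfolding DERIV_def by simp
          then show "(\<lambda>i. (\<phi> (\<gamma> + Y i) x - \<phi> \<gamma> x) / Y i) \<longlonglongrightarrow> \<phi>' \<gamma> x"
            using Y0 Y(2) unfolding tendsto_at_iff_sequentially by (auto simp: o_def)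
        qed
        show "AE x in M. norm ((\<phi> (\<gamma> + Y i) x - \<phi> \<gamma> x) / Y i) \<le> B x" for i
        proof (rule AE_I2)
          fix x assume x: "x \<in> space M"
          have "\<bar>\<phi> (\<gamma> + Y i) x - \<phi> \<gamma> x\<bar> \<le> B x * \<bar>Y i\<bar>" using mv[of "\<gamma> + Y i" x] Y(1)[of i] x by simp
          then show "norm ((\<phi> (\<gamma> + Y i) x - \<phi> \<gamma> x) / Y i) \<le> B x"
            using Y(2)[of i] by (simp add: abs_divide divide_le_eq)
        qed
      qed
      then show ?thesis unfolding eq .
    qed
    then have lim: "(\<lambda>i. ((\<integral>x. \<phi> (\<gamma> + X (i + N)) x \<partial>M) - (\<integral>x. \<phi> \<gamma> x \<partial>M)) / X (i + N)) \<longlonglongrightarrow> (\<integral>x. \<phi>' \<gamma> x \<partial>M)"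
      by (simp add: Y_def)
    then show "((\<lambda>h. ((\<integral>x. \<phi> (\<gamma> + h) x \<partial>M) - (\<integral>x. \<phi> \<gamma> x \<partial>M)) / h) \<circ> X) \<longlonglongrightarrow> (\<integral>x. \<phi>' \<gamma> x \<partial>M)"
      using LIMSEQ_offset[of "\<lambda>i. ((\<integral>x. \<phi> (\<gamma> + X i) x \<partial>M) - (\<integral>x. \<phi> \<gamma> x \<partial>M)) / X i" N] lim by (simp add: o_def)
  qed
qed



definition Pj :: "nat \<Rightarrow> nat \<Rightarrow> real \<Rightarrow> real \<Rightarrow> real" where
  "Pj j n g a = (if j = 0 then 1 else if j = 1 then real n / (2*g) - a
                 else (real n / (2*g) - a)\<^sup>2 - real n / (2 * g\<^sup>2))"

definition Us :: "nat \<Rightarrow> nat \<Rightarrow> real \<Rightarrow> real \<Rightarrow> real" where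
  "Us j n g a = g powr (real n / 2) * exp (- (g * a)) * Pj j n g a"

lemma Us_deriv0:
  assumes "0 < g" shows "((\<lambda>g. Us 0 n g a) has_real_derivative Us 1 n g a) (at g)"
proof -
  have "((\<lambda>g. g powr (real n / 2) * exp (- (g * a))) has_real_derivative
      (real n / 2 * g powr (real n / 2 - 1) * exp (- (g * a)) + g powr (real n / 2) * (exp (- (g * a)) * (- a)))) (at g)"
    using assms by (auto intro!: derivative_eq_intros has_real_derivative_powr)
  moreover have gp: "g powr (real n / 2 - 1) = g powr (real n / 2) / g" using assms by (simp add: powr_diff)
  moreover have "real n / 2 * (g powr (real n / 2) / g) * exp (- (g * a)) + g powr (real n / 2) * (exp (- (g * a)) * (- a))
      = Us 1 n g a"
    using assms by (simp add: Us_def Pj_def field_simps)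
  ultimately show ?thesis by (simp add: Us_def Pj_def)
qed

lemma Us_deriv1:
  assumes "0 < g" shows "((\<lambda>g. Us 1 n g a) has_real_derivative Us 2 n g a) (at g)"
proof -
  have D: "((\<lambda>g. g powr (real n / 2) * exp (- (g * a)) * (real n / (2*g) - a)) has_real_derivative
      ((real n / 2 * g powr (real n / 2 - 1) * exp (- (g * a)) + g powr (real n / 2) * (exp (- (g * a)) * (- a)))
        * (real n / (2*g) - a) + g powr (real n / 2) * exp (- (g * a)) * (- (real n * 2) / (2*g)\<^sup>2))) (at g)"
    using assms by (auto intro!: derivative_eq_intros has_real_derivative_powr simp: power2_eq_square) (simp add: algebra_simps)
  have gp: "g powr (real n / 2 - 1) = g powr (real n / 2) / g" using assms by (simp add: powr_diff)
  have E: "((real n / 2 * g powr (real n / 2 - 1) * exp (- (g * a)) + g powr (real n / 2) * (exp (- (g * a)) * (- a)))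
        * (real n / (2*g) - a) + g powr (real n / 2) * exp (- (g * a)) * (- (real n * 2) / (2*g)\<^sup>2))
      = Us 2 n g a"
    unfolding gp using assms by (simp add: Us_def Pj_def field_simps power2_eq_square)
  have F: "(\<lambda>g. Us 1 n g a) = (\<lambda>g. g powr (real n / 2) * exp (- (g * a)) * (real n / (2*g) - a))"
    by (simp add: Us_def Pj_def fun_eq_iff)
  show ?thesis unfolding F using D unfolding E .
qed

lemma Us2_nonneg:
  assumes g: "0 < g" and t: "real n / 2 + sqrt (real n / 2) \<le> g * a"
  shows "0 \<le> Us 2 n g a"
proof -
  define k where "k = real n / 2"
  have k0: "0 \<le> k" by (simp add: k_def)
  have "sqrt k \<le> g * a - k" using t by (simp add: k_def)
  then have "(sqrt k)\<^sup>2 \<le> (g * a - k)\<^sup>2" using k0 by (intro power_mono) auto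
  then have "k \<le> (g * a - k)\<^sup>2" using k0 by simp
  then have "0 \<le> ((g * a - k)\<^sup>2 - k) / g\<^sup>2" by simp
  also have "((g * a - k)\<^sup>2 - k) / g\<^sup>2 = (k / g - a)\<^sup>2 - k / g\<^sup>2"
    using g by (simp add: field_simps power2_eq_square)
  finally have "0 \<le> Pj 2 n g a" by (simp add: Pj_def k_def)
  then show ?thesis by (simp add: Us_def)
qed

lemma poly_exp_bound:
  fixes b \<rho> :: real assumes b: "0 < b" and \<rho>: "0 \<le> \<rho>"
  shows "(1 + \<rho>)\<^sup>2 * exp (- (2 * b * \<rho>)) \<le> exp (- (b * \<rho>)) / (min 1 (b/2))\<^sup>2"
proof -
  define m where "m = min 1 (b/2)"
  have m0: "0 < m" using b by (simp add: m_def)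
  have "m * (1 + \<rho>) \<le> 1 + b * \<rho> / 2"
  proof (cases "b \<le> 2")
    case True
    then have "b/2 * (1 + \<rho>) \<le> 1 + b * \<rho> / 2" by (simp add: algebra_simps)
    then show ?thesis using True by (simp add: m_def min_def)
  next
    case False
    then have "\<rho> \<le> b * \<rho> / 2" using \<rho> mult_right_mono[of 2 b \<rho>] by simp
    then show ?thesis using False by (simp add: m_def min_def)
  qed
  also have "\<dots> \<le> exp (b * \<rho> / 2)" by (rule exp_ge_add_one_self)
  finally have "(m * (1 + \<rho>))\<^sup>2 \<le> (exp (b * \<rho> / 2))\<^sup>2" using m0 \<rho> by (intro power_mono) auto
  also have "(exp (b * \<rho> / 2))\<^sup>2 = exp (b * \<rho>)" by (simp add: power2_eq_square exp_add[symmetric])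
  finally have 1: "m\<^sup>2 * (1 + \<rho>)\<^sup>2 \<le> exp (b * \<rho>)" by (simp add: power_mult_distrib)
  have "m\<^sup>2 * ((1 + \<rho>)\<^sup>2 * exp (- (2 * b * \<rho>))) \<le> exp (b * \<rho>) * exp (- (2 * b * \<rho>))"
    using mult_right_mono[OF 1, of "exp (- (2 * b * \<rho>))"] by (simp add: mult.assoc)
  also have "exp (b * \<rho>) * exp (- (2 * b * \<rho>)) = exp (- (b * \<rho>))" by (simp add: exp_add[symmetric])
  finally show ?thesis using m0 by (simp add: m_def field_simps)
qed

lemma Pj_bound:
  assumes "0 < g" "0 \<le> a" "j \<le> 2"
  shows "\<bar>Pj j n g a\<bar> \<le> 2 * (1 + real n / g + a)\<^sup>2"
proof -
  define X where "X = real n / g"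
  have X0: "0 \<le> X" using assms by (simp add: X_def)
  define Y where "Y = X + a"
  have Y0: "0 \<le> Y" using X0 assms by (simp add: Y_def)
  have 1: "1 \<le> (1 + Y)\<^sup>2" using Y0 by (intro one_le_power) simp
  have h1: "real n / (2*g) \<le> X" "0 \<le> real n / (2*g)" using assms(1) by (auto simp: X_def field_simps)
  have 2: "\<bar>real n / (2*g) - a\<bar> \<le> Y" using h1 assms(2) by (simp add: Y_def abs_le_iff)
  have 3: "Y \<le> (1 + Y)\<^sup>2" using Y0 mult_nonneg_nonneg[OF Y0 Y0] by (simp add: power2_eq_square algebra_simps)
  have "real n / 2 \<le> real n * real n"
    by (cases n) (auto simp: field_simps)
  then have "(real n / 2) / g\<^sup>2 \<le> (real n * real n) / g\<^sup>2" by (rule divide_right_mono) simp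
  then have 4: "real n / (2 * g\<^sup>2) \<le> X\<^sup>2" by (simp add: X_def power2_eq_square)
  have 5: "(real n / (2*g) - a)\<^sup>2 \<le> Y\<^sup>2"
    using 2 Y0 by (metis abs_le_square_iff abs_of_nonneg)
  have "X\<^sup>2 \<le> (1 + Y)\<^sup>2" using X0 assms(2) by (intro power_mono) (auto simp: Y_def)
  moreover have "Y\<^sup>2 \<le> (1 + Y)\<^sup>2" using Y0 by (intro power_mono) auto
  ultimately have 6: "Y\<^sup>2 + X\<^sup>2 \<le> 2 * (1 + Y)\<^sup>2" by simp
  have n0: "0 \<le> real n / (2 * g\<^sup>2)" by simp
  have "\<bar>Pj j n g a\<bar> \<le> 2 * (1 + Y)\<^sup>2"
  proof (cases "j = 0")
    case True then show ?thesis using 1 by (simp add: Pj_def)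
  next
    case False
    show ?thesis
    proof (cases "j = 1")
      case True then show ?thesis using 2 3 \<open>j \<noteq> 0\<close> by (simp add: Pj_def)
    next
      case False
      have "\<bar>Pj j n g a\<bar> = \<bar>(real n / (2*g) - a)\<^sup>2 - real n / (2 * g\<^sup>2)\<bar>"
        using False \<open>j \<noteq> 0\<close> by (simp add: Pj_def)
      also have "\<dots> \<le> (real n / (2*g) - a)\<^sup>2 + real n / (2 * g\<^sup>2)" using n0 by (simp add: abs_le_iff)
      also have "\<dots> \<le> Y\<^sup>2 + X\<^sup>2" using 4 5 by simp
      finally show ?thesis using 6 by simp
    qed
  qed
  then show ?thesis by (simp add: Y_def X_def add.assoc)
qed



lemma cU_bound:
  assumes \<gamma>: "0 < \<gamma>" and s1: "0 < \<sigma>1" and s12: "\<sigma>1 \<le> \<sigma>2"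
  shows "\<exists>C. \<forall>j g \<rho> \<sigma>. j \<le> 2 \<longrightarrow> \<bar>g - \<gamma>\<bar> < \<gamma>/2 \<longrightarrow> 0 \<le> \<rho> \<longrightarrow> \<sigma>1 \<le> \<sigma> \<longrightarrow> \<sigma> \<le> \<sigma>2 \<longrightarrow>
     \<bar>(2*pi*\<sigma>\<^sup>2) powr (- real n / 2) * Us j n g (\<rho>/(2*\<sigma>\<^sup>2))\<bar> \<le> C * exp (- (\<gamma>/(8*\<sigma>2\<^sup>2) * \<rho>))"
proof -
  define b where "b = \<gamma>/(8*\<sigma>2\<^sup>2)"
  have b0: "0 < b" using \<gamma> s1 s12 by (simp add: b_def)
  define c0 where "c0 = (2*pi*\<sigma>1\<^sup>2) powr (- real n / 2)"
  define G where "G = (2*\<gamma>) powr (real n / 2)"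
  define L where "L = 1/(2*\<sigma>1\<^sup>2)"
  define Q where "Q = 1 + 2 * real n / \<gamma> + L"
  define m where "m = min 1 (b/2)"
  have L0: "0 \<le> L" by (simp add: L_def)
  have Q1: "1 \<le> Q" using \<gamma> L0 by (simp add: Q_def)
  show ?thesis
  proof (intro exI allI impI)
    fix j :: nat and g \<rho> \<sigma> :: real assume j: "j \<le> (2::nat)" and g: "\<bar>g - \<gamma>\<bar> < \<gamma>/2" and \<rho>: "0 \<le> \<rho>"
      and s: "\<sigma>1 \<le> \<sigma>" "\<sigma> \<le> \<sigma>2"
    have gg: "g - \<gamma> < \<gamma>/2" "\<gamma> - g < \<gamma>/2" using g by (auto simp only: abs_less_iff)
    have g0: "\<gamma>/2 < g" "g \<le> 2*\<gamma>" using gg \<gamma> by linarith+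
    have sp: "0 < \<sigma>" using s s1 by simp
    define a where "a = \<rho>/(2*\<sigma>\<^sup>2)"
    have a0: "0 \<le> a" using \<rho> by (simp add: a_def)
    have c_le: "(2*pi*\<sigma>\<^sup>2) powr (- real n / 2) \<le> c0"
      unfolding c0_def using s s1 by (intro powr_mono2') (auto intro!: power_mono)
    have G_le: "g powr (real n / 2) \<le> G"
      unfolding G_def using g0 \<gamma> by (intro powr_mono2) auto
    have a_lo: "\<rho>/(2*\<sigma>2\<^sup>2) \<le> a"
      unfolding a_def using s sp \<rho> by (intro divide_left_mono) (auto intro!: power_mono)
    have a_hi: "a \<le> L * \<rho>"
    proof -
      have "\<rho>/(2*\<sigma>\<^sup>2) \<le> \<rho>/(2*\<sigma>1\<^sup>2)"
        using s s1 \<rho> by (intro divide_left_mono) (auto intro!: power_mono)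
      then show ?thesis by (simp add: a_def L_def)
    qed
    have "(\<gamma>/2) * (\<rho>/(2*\<sigma>2\<^sup>2)) \<le> g * a"
      using g0 a_lo \<rho> \<gamma> by (intro mult_mono) auto
    moreover have "(\<gamma>/2) * (\<rho>/(2*\<sigma>2\<^sup>2)) = 2 * b * \<rho>" by (simp add: b_def field_simps)
    ultimately have e_le: "exp (- (g * a)) \<le> exp (- (2 * b * \<rho>))" by simp
    have "real n / g \<le> real n / (\<gamma>/2)"
      using g0 \<gamma> by (intro divide_left_mono) auto
    then have "real n / g \<le> 2 * real n / \<gamma>" by (simp add: mult.commute)
    moreover have "L * \<rho> \<le> Q * \<rho>" using \<rho> Q1 \<gamma> by (intro mult_right_mono) (auto simp: Q_def)
    moreover have "0 \<le> 2 * real n / \<gamma>" using \<gamma> by simp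
    moreover have "Q * (1 + \<rho>) = Q + Q * \<rho>" by (simp add: distrib_left)
    moreover have "1 + 2 * real n / \<gamma> \<le> Q" using L0 by (simp add: Q_def)
    ultimately have "1 + real n / g + a \<le> Q * (1 + \<rho>)"
      using a_hi by linarith
    moreover have "0 \<le> 1 + real n / g + a" using g0 \<gamma> a0 by simp
    ultimately have "(1 + real n / g + a)\<^sup>2 \<le> (Q * (1 + \<rho>))\<^sup>2" by (intro power_mono)
    then have P_le: "\<bar>Pj j n g a\<bar> \<le> 2 * Q\<^sup>2 * (1 + \<rho>)\<^sup>2"
      using Pj_bound[of g a j n] g0 \<gamma> a0 j by (simp add: power_mult_distrib)
    have cnn: "0 \<le> (2*pi*\<sigma>\<^sup>2) powr (- real n / 2)" by simp
    have "\<bar>(2*pi*\<sigma>\<^sup>2) powr (- real n / 2) * Us j n g a\<bar>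
        = (2*pi*\<sigma>\<^sup>2) powr (- real n / 2) * g powr (real n / 2) * exp (- (g * a)) * \<bar>Pj j n g a\<bar>"
      using g0 \<gamma> by (simp add: Us_def abs_mult)
    also have "\<dots> \<le> c0 * G * exp (- (2 * b * \<rho>)) * (2 * Q\<^sup>2 * (1 + \<rho>)\<^sup>2)"
      using c_le G_le e_le P_le cnn
      by (intro mult_mono) (auto intro!: mult_nonneg_nonneg simp: c0_def G_def)
    also have "\<dots> = (c0 * G * 2 * Q\<^sup>2) * ((1 + \<rho>)\<^sup>2 * exp (- (2 * b * \<rho>)))" by (simp add: algebra_simps)
    also have "\<dots> \<le> (c0 * G * 2 * Q\<^sup>2) * (exp (- (b * \<rho>)) / m\<^sup>2)"
      unfolding m_def using poly_exp_bound[OF b0 \<rho>] by (intro mult_left_mono) (auto simp: c0_def G_def)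
    also have "\<dots> = (c0 * G * 2 * Q\<^sup>2 / m\<^sup>2) * exp (- (\<gamma>/(8*\<sigma>2\<^sup>2) * \<rho>))" by (simp add: b_def)
    finally show "\<bar>(2*pi*\<sigma>\<^sup>2) powr (- real n / 2) * Us j n g (\<rho>/(2*\<sigma>\<^sup>2))\<bar>
        \<le> (c0 * G * 2 * Q\<^sup>2 / m\<^sup>2) * exp (- (\<gamma>/(8*\<sigma>2\<^sup>2) * \<rho>))" by (simp add: a_def)
  qed
qed



lemma gauss1_integrable:
  fixes b \<mu> :: real assumes b: "0 < b"
  shows "integrable lborel (\<lambda>t. exp (- (b * (t - \<mu>)\<^sup>2)))"
proof -
  define \<sigma> where "\<sigma> = 1 / sqrt (2 * b)"
  have "0 < \<sigma>" using b by (simp add: \<sigma>_def)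
  have s2: "\<sigma>\<^sup>2 = 1 / (2 * b)" using b by (simp add: \<sigma>_def power_divide)
  have "integrable lborel (\<lambda>t. sqrt (2 * pi * \<sigma>\<^sup>2) * normal_density \<mu> \<sigma> t)"
    using \<open>0 < \<sigma>\<close> by (intro integrable_mult_right integrable_normal_density) auto
  moreover have "sqrt (2 * pi * \<sigma>\<^sup>2) * normal_density \<mu> \<sigma> t = exp (- (b * (t - \<mu>)\<^sup>2))" for t
    using b \<open>0 < \<sigma>\<close> by (simp add: normal_density_def s2 field_simps)
  ultimately show ?thesis by simp
qed

lemma gauss_integrable:
  fixes s :: "'a::euclidean_space" and b :: real assumes b: "0 < b"
  shows "integrable lborel (\<lambda>r. exp (- (b * (norm (r - s))\<^sup>2)))"
proof (rule integrableI_nonneg)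
  show "(\<lambda>r. exp (- (b * (norm (r - s))\<^sup>2))) \<in> borel_measurable lborel" by measurable
  show "AE x in lborel. 0 \<le> exp (- (b * (norm (x - s))\<^sup>2))" by simp
  define F where "F j t = ennreal (exp (- (b * (t - s \<bullet> j)\<^sup>2)))" for j :: 'a and t
  have eq: "ennreal (exp (- (b * (norm (r - s))\<^sup>2))) = (\<Prod>j\<in>Basis. F j (r \<bullet> j))" for r
  proof -
    have "(norm (r - s))\<^sup>2 = (r - s) \<bullet> (r - s)" by (simp add: power2_norm_eq_inner)
    also have "\<dots> = (\<Sum>j\<in>Basis. ((r - s) \<bullet> j) * ((r - s) \<bullet> j))" by (rule euclidean_inner)
    also have "\<dots> = (\<Sum>j\<in>Basis. (r \<bullet> j - s \<bullet> j)\<^sup>2)" by (simp add: inner_diff_left power2_eq_square)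
    finally have "(norm (r - s))\<^sup>2 = (\<Sum>j\<in>Basis. (r \<bullet> j - s \<bullet> j)\<^sup>2)" .
    then have "exp (- (b * (norm (r - s))\<^sup>2)) = (\<Prod>j\<in>Basis. exp (- (b * (r \<bullet> j - s \<bullet> j)\<^sup>2)))"
      by (simp add: sum_distrib_left exp_sum sum_negf[symmetric])
    then show ?thesis unfolding F_def by (simp add: prod_ennreal)
  qed
  have fin: "(\<integral>\<^sup>+t. F j t \<partial>lborel) < \<infinity>" for j
    using gauss1_integrable[OF b, of "s \<bullet> j"] unfolding integrable_iff_bounded F_def by simp
  have "(\<integral>\<^sup>+r. ennreal (exp (- (b * (norm (r - s))\<^sup>2))) \<partial>lborel) = (\<integral>\<^sup>+r. (\<Prod>j\<in>Basis. F j (r \<bullet> j)) \<partial>lborel)"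
    by (simp add: eq)
  also have "\<dots> = (\<Prod>j\<in>Basis. (\<integral>\<^sup>+t. F j t \<partial>lborel))"
    by (rule nn_integral_lborel_prod) (auto simp: F_def)
  also have "\<dots> < \<infinity>"
  proof -
    have "(\<Prod>j\<in>Basis. (\<integral>\<^sup>+t. F j t \<partial>lborel)) \<noteq> top"
      unfolding ennreal_prod_eq_top using fin by (auto simp: less_top)
    then show ?thesis by (simp add: less_top)
  qed
  finally show "(\<integral>\<^sup>+r. ennreal (exp (- (b * (norm (r - s))\<^sup>2))) \<partial>lborel) < \<infinity>" .
qed



lemma Us_meas[measurable]: "(\<lambda>a. Us j n g a) \<in> borel_measurable borel"
  unfolding Us_def Pj_def by measurable

context
  fixes f :: "real \<Rightarrow> real" and \<sigma>1 \<sigma>2 :: real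
  assumes s1: "0 < \<sigma>1" and s12: "\<sigma>1 \<le> \<sigma>2"
    and fm: "f \<in> borel_measurable lborel" and fnn: "\<And>\<sigma>. 0 \<le> f \<sigma>"
    and fint: "integrable lborel f" and f1: "integral\<^sup>L lborel f = 1"
    and fz: "\<And>\<sigma>. \<sigma> \<notin> {\<sigma>1..\<sigma>2} \<Longrightarrow> f \<sigma> = 0"
begin

lemma fmb[measurable]: "f \<in> borel_measurable borel" using fm by simp

definition hh :: "nat \<Rightarrow> nat \<Rightarrow> real \<Rightarrow> real \<Rightarrow> real" where
  "hh j n g \<rho> = (\<integral>\<sigma>. (2*pi*\<sigma>\<^sup>2) powr (- real n / 2) * Us j n g (\<rho>/(2*\<sigma>\<^sup>2)) * f \<sigma> \<partial>lborel)"

lemma hh_meas[measurable]: "(\<lambda>\<rho>. hh j n g \<rho>) \<in> borel_measurable borel"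
  unfolding hh_def by measurable

lemma Phi_bound:
  assumes \<gamma>: "0 < \<gamma>"
  shows "\<exists>C. \<forall>j g \<rho> \<sigma>. j \<le> 2 \<longrightarrow> \<bar>g - \<gamma>\<bar> < \<gamma>/2 \<longrightarrow> 0 \<le> \<rho> \<longrightarrow>
     \<bar>(2*pi*\<sigma>\<^sup>2) powr (- real n / 2) * Us j n g (\<rho>/(2*\<sigma>\<^sup>2)) * f \<sigma>\<bar> \<le> C * exp (- (\<gamma>/(8*\<sigma>2\<^sup>2) * \<rho>)) * f \<sigma>"
proof -
  obtain C where C: "\<And>j g \<rho> \<sigma>. j \<le> 2 \<Longrightarrow> \<bar>g - \<gamma>\<bar> < \<gamma>/2 \<Longrightarrow> 0 \<le> \<rho> \<Longrightarrow> \<sigma>1 \<le> \<sigma> \<Longrightarrow> \<sigma> \<le> \<sigma>2 \<Longrightarrow>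
     \<bar>(2*pi*\<sigma>\<^sup>2) powr (- real n / 2) * Us j n g (\<rho>/(2*\<sigma>\<^sup>2))\<bar> \<le> C * exp (- (\<gamma>/(8*\<sigma>2\<^sup>2) * \<rho>))"
    using cU_bound[OF \<gamma> s1 s12, of n] by blast
  show ?thesis
  proof (intro exI allI impI)
    fix j g \<rho> \<sigma> assume *: "j \<le> (2::nat)" "\<bar>g - \<gamma>\<bar> < \<gamma>/2" "0 \<le> (\<rho>::real)"
    show "\<bar>(2*pi*\<sigma>\<^sup>2) powr (- real n / 2) * Us j n g (\<rho>/(2*\<sigma>\<^sup>2)) * f \<sigma>\<bar> \<le> C * exp (- (\<gamma>/(8*\<sigma>2\<^sup>2) * \<rho>)) * f \<sigma>"
    proof (cases "\<sigma> \<in> {\<sigma>1..\<sigma>2}")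
      case True
      have "\<bar>(2*pi*\<sigma>\<^sup>2) powr (- real n / 2) * Us j n g (\<rho>/(2*\<sigma>\<^sup>2)) * f \<sigma>\<bar>
          = \<bar>(2*pi*\<sigma>\<^sup>2) powr (- real n / 2) * Us j n g (\<rho>/(2*\<sigma>\<^sup>2))\<bar> * f \<sigma>"
        using fnn[of \<sigma>] by (simp add: abs_mult)
      also have "\<dots> \<le> C * exp (- (\<gamma>/(8*\<sigma>2\<^sup>2) * \<rho>)) * f \<sigma>"
        using C[OF *, of \<sigma>] True fnn[of \<sigma>] by (intro mult_right_mono) auto
      finally show ?thesis .
    qed (simp add: fz)
  qed
qed

lemma hh_bound:
  assumes \<gamma>: "0 < \<gamma>"
  shows "\<exists>C. \<forall>j g \<rho>. j \<le> 2 \<longrightarrow> \<bar>g - \<gamma>\<bar> < \<gamma>/2 \<longrightarrow> 0 \<le> \<rho> \<longrightarrow>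
     integrable lborel (\<lambda>\<sigma>. (2*pi*\<sigma>\<^sup>2) powr (- real n / 2) * Us j n g (\<rho>/(2*\<sigma>\<^sup>2)) * f \<sigma>) \<and>
     \<bar>hh j n g \<rho>\<bar> \<le> C * exp (- (\<gamma>/(8*\<sigma>2\<^sup>2) * \<rho>))"
proof -
  obtain C where C: "\<And>j g \<rho> \<sigma>. j \<le> 2 \<Longrightarrow> \<bar>g - \<gamma>\<bar> < \<gamma>/2 \<Longrightarrow> 0 \<le> \<rho> \<Longrightarrow>
     \<bar>(2*pi*\<sigma>\<^sup>2) powr (- real n / 2) * Us j n g (\<rho>/(2*\<sigma>\<^sup>2)) * f \<sigma>\<bar> \<le> C * exp (- (\<gamma>/(8*\<sigma>2\<^sup>2) * \<rho>)) * f \<sigma>"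
    using Phi_bound[OF \<gamma>, of n] by blast
  show ?thesis
  proof (intro exI allI impI conjI)
    fix j g \<rho> assume *: "j \<le> (2::nat)" "\<bar>g - \<gamma>\<bar> < \<gamma>/2" "0 \<le> (\<rho>::real)"
    define E where "E = C * exp (- (\<gamma>/(8*\<sigma>2\<^sup>2) * \<rho>))"
    have iE: "integrable lborel (\<lambda>\<sigma>. E * f \<sigma>)" using fint by simp
    show int: "integrable lborel (\<lambda>\<sigma>. (2*pi*\<sigma>\<^sup>2) powr (- real n / 2) * Us j n g (\<rho>/(2*\<sigma>\<^sup>2)) * f \<sigma>)"
    proof (rule Bochner_Integration.integrable_bound[OF iE])
      show "AE x in lborel. norm ((2*pi*x\<^sup>2) powr (- real n / 2) * Us j n g (\<rho>/(2*x\<^sup>2)) * f x) \<le> norm (E * f x)"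
      proof (rule AE_I2)
        fix x
        show "norm ((2*pi*x\<^sup>2) powr (- real n / 2) * Us j n g (\<rho>/(2*x\<^sup>2)) * f x) \<le> norm (E * f x)"
          using C[OF *, of x] abs_ge_self[of "E * f x"] unfolding E_def real_norm_def by linarith
      qed
      show "(\<lambda>\<sigma>. (2*pi*\<sigma>\<^sup>2) powr (- real n / 2) * Us j n g (\<rho>/(2*\<sigma>\<^sup>2)) * f \<sigma>) \<in> borel_measurable lborel"
        by measurable
    qed
    have "\<bar>hh j n g \<rho>\<bar> \<le> (\<integral>\<sigma>. \<bar>(2*pi*\<sigma>\<^sup>2) powr (- real n / 2) * Us j n g (\<rho>/(2*\<sigma>\<^sup>2)) * f \<sigma>\<bar> \<partial>lborel)"
      unfolding hh_def using integral_norm_bound[of lborel "\<lambda>\<sigma>. (2*pi*\<sigma>\<^sup>2) powr (- real n / 2) * Us j n g (\<rho>/(2*\<sigma>\<^sup>2)) * f \<sigma>"]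
      by (simp only: real_norm_def)
    also have "\<dots> \<le> (\<integral>\<sigma>. E * f \<sigma> \<partial>lborel)"
    proof (rule integral_mono[OF integrable_abs[OF int] iE])
      fix x show "\<bar>(2*pi*x\<^sup>2) powr (- real n / 2) * Us j n g (\<rho>/(2*x\<^sup>2)) * f x\<bar> \<le> E * f x"
        using C[OF *, of x] unfolding E_def .
    qed
    also have "\<dots> = E" using f1 by simp
    finally show "\<bar>hh j n g \<rho>\<bar> \<le> C * exp (- (\<gamma>/(8*\<sigma>2\<^sup>2) * \<rho>))" by (simp add: E_def)
  qed
qed

lemma hh_deriv:
  assumes \<gamma>: "0 < \<gamma>" and \<rho>: "0 \<le> \<rho>" and j: "j \<le> 1"
  shows "((\<lambda>g. hh j n g \<rho>) has_real_derivative hh (Suc j) n \<gamma> \<rho>) (at \<gamma>)"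
proof -
  obtain C where C: "\<And>j g \<rho> \<sigma>. j \<le> 2 \<Longrightarrow> \<bar>g - \<gamma>\<bar> < \<gamma>/2 \<Longrightarrow> 0 \<le> \<rho> \<Longrightarrow>
     \<bar>(2*pi*\<sigma>\<^sup>2) powr (- real n / 2) * Us j n g (\<rho>/(2*\<sigma>\<^sup>2)) * f \<sigma>\<bar> \<le> C * exp (- (\<gamma>/(8*\<sigma>2\<^sup>2) * \<rho>)) * f \<sigma>"
    using Phi_bound[OF \<gamma>, of n] by blast
  obtain C' where C': "\<And>j g \<rho>. j \<le> 2 \<Longrightarrow> \<bar>g - \<gamma>\<bar> < \<gamma>/2 \<Longrightarrow> 0 \<le> \<rho> \<Longrightarrow>
     integrable lborel (\<lambda>\<sigma>. (2*pi*\<sigma>\<^sup>2) powr (- real n / 2) * Us j n g (\<rho>/(2*\<sigma>\<^sup>2)) * f \<sigma>)"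
    using hh_bound[OF \<gamma>, of n] by blast
  have dUs: "((\<lambda>g. Us j n g a) has_real_derivative Us (Suc j) n g a) (at g)" if "0 < g" for g a
    using j Us_deriv0[OF that] Us_deriv1[OF that] by (cases j) (auto simp: numeral_2_eq_2)
  show ?thesis
    unfolding hh_def
  proof (rule diff_under_integral_deriv[where \<delta>="\<gamma>/2" and B="\<lambda>\<sigma>. C * exp (- (\<gamma>/(8*\<sigma>2\<^sup>2) * \<rho>)) * f \<sigma>"])
    show "0 < \<gamma>/2" using \<gamma> by simp
    show "integrable lborel (\<lambda>\<sigma>. (2*pi*\<sigma>\<^sup>2) powr (- real n / 2) * Us j n \<gamma> (\<rho>/(2*\<sigma>\<^sup>2)) * f \<sigma>)"
      using C'[of j \<gamma> \<rho>] j \<gamma> \<rho> by simp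
    show "integrable lborel (\<lambda>\<sigma>. C * exp (- (\<gamma>/(8*\<sigma>2\<^sup>2) * \<rho>)) * f \<sigma>)" using fint by simp
    fix g \<sigma> assume g: "\<bar>g - \<gamma>\<bar> < \<gamma>/2"
    then have g0: "0 < g" by (auto simp only: abs_less_iff)
    show "((\<lambda>g. (2*pi*\<sigma>\<^sup>2) powr (- real n / 2) * Us j n g (\<rho>/(2*\<sigma>\<^sup>2)) * f \<sigma>) has_real_derivative
        (2*pi*\<sigma>\<^sup>2) powr (- real n / 2) * Us (Suc j) n g (\<rho>/(2*\<sigma>\<^sup>2)) * f \<sigma>) (at g)"
      by (intro DERIV_cmult_right DERIV_cmult dUs g0)
    show "\<bar>(2*pi*\<sigma>\<^sup>2) powr (- real n / 2) * Us (Suc j) n g (\<rho>/(2*\<sigma>\<^sup>2)) * f \<sigma>\<bar> \<le> C * exp (- (\<gamma>/(8*\<sigma>2\<^sup>2) * \<rho>)) * f \<sigma>"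
      using C[of "Suc j" g \<rho> \<sigma>] j g \<rho> by simp
  next
    show "(\<lambda>\<sigma>. (2*pi*\<sigma>\<^sup>2) powr (- real n / 2) * Us (Suc j) n \<gamma> (\<rho>/(2*\<sigma>\<^sup>2)) * f \<sigma>) \<in> borel_measurable lborel"
      by measurable
    fix g
    show "(\<lambda>\<sigma>. (2*pi*\<sigma>\<^sup>2) powr (- real n / 2) * Us j n g (\<rho>/(2*\<sigma>\<^sup>2)) * f \<sigma>) \<in> borel_measurable lborel"
      by measurable
  qed
qed

end


context
  fixes f :: "real \<Rightarrow> real" and \<sigma>1 \<sigma>2 :: real
  assumes s1: "0 < \<sigma>1" and s12: "\<sigma>1 \<le> \<sigma>2"
    and fm: "f \<in> borel_measurable lborel" and fnn: "\<And>\<sigma>. 0 \<le> f \<sigma>"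
    and fint: "integrable lborel f" and f1: "integral\<^sup>L lborel f = 1"
    and fz: "\<And>\<sigma>. \<sigma> \<notin> {\<sigma>1..\<sigma>2} \<Longrightarrow> f \<sigma> = 0"
begin

lemma fmb'[measurable]: "f \<in> borel_measurable borel" using fm by simp

lemma hh_meas'[measurable]: "(\<lambda>\<rho>. hh f j n g \<rho>) \<in> borel_measurable borel"
  using hh_meas[of \<sigma>1 \<sigma>2 f, OF s1 s12 fm fnn fint f1 fz] by simp

lemma hhb: "0 < \<gamma> \<Longrightarrow> \<exists>C. \<forall>j g \<rho>. j \<le> 2 \<longrightarrow> \<bar>g - \<gamma>\<bar> < \<gamma>/2 \<longrightarrow> 0 \<le> \<rho> \<longrightarrow>
     \<bar>hh f j n g \<rho>\<bar> \<le> C * exp (- (\<gamma>/(8*\<sigma>2\<^sup>2) * \<rho>))"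
  using hh_bound[of \<sigma>1 \<sigma>2 f, OF s1 s12 fm fnn fint f1, of \<gamma> n] fz by blast

lemma hhd: "0 < \<gamma> \<Longrightarrow> 0 \<le> \<rho> \<Longrightarrow> j \<le> 1 \<Longrightarrow>
    ((\<lambda>g. hh f j n g \<rho>) has_real_derivative hh f (Suc j) n \<gamma> \<rho>) (at \<gamma>)"
  using hh_deriv[of \<sigma>1 \<sigma>2 f, OF s1 s12 fm fnn fint f1, of \<gamma> \<rho> j n] fz by blast

lemma hh_def': "hh f j n g \<rho> = (\<integral>\<sigma>. (2*pi*\<sigma>\<^sup>2) powr (- real n / 2) * Us j n g (\<rho>/(2*\<sigma>\<^sup>2)) * f \<sigma> \<partial>lborel)"
  apply (rule hh_def[of \<sigma>1 \<sigma>2 f, OF s1 s12 fm fnn fint f1])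
  using fz by blast

definition PP :: "nat \<Rightarrow> real ^ 'n \<Rightarrow> (real ^ 'n) set \<Rightarrow> real \<Rightarrow> real" where
  "PP j s A g = (\<integral>r. indicator A r * hh f j CARD('n) g ((norm (r - s))\<^sup>2) \<partial>lborel)"

lemma PP_layer:
  fixes s :: "real ^ 'n"
  assumes A: "A \<in> sets lborel" and \<gamma>: "0 < \<gamma>"
  shows PP_int: "\<And>j g. j \<le> 2 \<Longrightarrow> \<bar>g - \<gamma>\<bar> < \<gamma>/2 \<Longrightarrow>
           integrable lborel (\<lambda>r. indicator A r * hh f j CARD('n) g ((norm (r - s))\<^sup>2))"
    and PP_deriv: "\<And>j. j \<le> 1 \<Longrightarrow> ((\<lambda>g. PP j s A g) has_real_derivative PP (Suc j) s A \<gamma>) (at \<gamma>)"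
proof -
  define n where "n = CARD('n)"
  obtain C where C: "\<And>j g \<rho>. j \<le> 2 \<Longrightarrow> \<bar>g - \<gamma>\<bar> < \<gamma>/2 \<Longrightarrow> 0 \<le> \<rho> \<Longrightarrow>
     \<bar>hh f j n g \<rho>\<bar> \<le> C * exp (- (\<gamma>/(8*\<sigma>2\<^sup>2) * \<rho>))"
    using hhb[OF \<gamma>, of n] by blast
  define b where "b = \<gamma>/(8*\<sigma>2\<^sup>2)"
  have b0: "0 < b" using \<gamma> s1 s12 by (simp add: b_def)
  define B where "B r = C * exp (- (b * (norm (r - s))\<^sup>2))" for r :: "real ^ 'n"
  have intB: "integrable lborel B" unfolding B_def
    using gauss_integrable[OF b0, of s] by (rule integrable_mult_right)
  have bnd: "\<bar>indicator A r * hh f j n g ((norm (r - s))\<^sup>2)\<bar> \<le> B r"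
    if "j \<le> 2" "\<bar>g - \<gamma>\<bar> < \<gamma>/2" for j g r
  proof -
    have h: "\<bar>hh f j n g ((norm (r - s))\<^sup>2)\<bar> \<le> B r"
      using C[OF that, of "(norm (r - s))\<^sup>2"] by (simp add: B_def b_def)
    show ?thesis
      by (cases "r \<in> A") (use h in auto)
  qed
  show int: "integrable lborel (\<lambda>r. indicator A r * hh f j CARD('n) g ((norm (r - s))\<^sup>2))"
    if "j \<le> 2" "\<bar>g - \<gamma>\<bar> < \<gamma>/2" for j g
  proof (rule Bochner_Integration.integrable_bound[OF intB])
    show "(\<lambda>r. indicator A r * hh f j CARD('n) g ((norm (r - s))\<^sup>2)) \<in> borel_measurable lborel"
      using A by measurable
    show "AE x in lborel. norm (indicator A x * hh f j CARD('n) g ((norm (x - s))\<^sup>2)) \<le> norm (B x)"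
    proof (rule AE_I2)
      fix x show "norm (indicator A x * hh f j CARD('n) g ((norm (x - s))\<^sup>2)) \<le> norm (B x)"
        using bnd[OF that, of x] abs_ge_self[of "B x"] unfolding n_def real_norm_def by linarith
    qed
  qed
  show "((\<lambda>g. PP j s A g) has_real_derivative PP (Suc j) s A \<gamma>) (at \<gamma>)" if j: "j \<le> 1" for j
    unfolding PP_def
  proof (rule diff_under_integral_deriv[where \<delta>="\<gamma>/2" and B=B])
    show "0 < \<gamma>/2" using \<gamma> by simp
    show "integrable lborel (\<lambda>r. indicator A r * hh f j CARD('n) \<gamma> ((norm (r - s))\<^sup>2))"
      using int[of j \<gamma>] j \<gamma> by simp
    show "integrable lborel B" by (rule intB)
    show "(\<lambda>r. indicator A r * hh f (Suc j) CARD('n) \<gamma> ((norm (r - s))\<^sup>2)) \<in> borel_measurable lborel"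
      using A by measurable
    fix g r assume g: "\<bar>g - \<gamma>\<bar> < \<gamma>/2"
    then have g0: "0 < g" by (auto simp only: abs_less_iff)
    show "((\<lambda>g. indicator A r * hh f j CARD('n) g ((norm (r - s))\<^sup>2)) has_real_derivative
        indicator A r * hh f (Suc j) CARD('n) g ((norm (r - s))\<^sup>2)) (at g)"
      by (intro DERIV_cmult hhd g0 j) simp
    show "\<bar>indicator A r * hh f (Suc j) CARD('n) g ((norm (r - s))\<^sup>2)\<bar> \<le> B r"
      using bnd[of "Suc j" g r] j g by (simp add: n_def)
  next
    fix g
    show "(\<lambda>r. indicator A r * hh f j CARD('n) g ((norm (r - s))\<^sup>2)) \<in> borel_measurable lborel"
      using A by measurable
  qed
qed

lemma sqrt_pow_powr: "0 < (\<gamma>::real) \<Longrightarrow> sqrt \<gamma> ^ n = \<gamma> powr (real n / 2)"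
proof -
  assume g: "0 < \<gamma>"
  have "sqrt \<gamma> ^ n = (\<gamma> powr (1/2)) ^ n" using g by (simp add: powr_half_sqrt)
  also have "\<dots> = \<gamma> powr (real n * (1/2))" using g by (simp add: powr_power)
  finally show ?thesis by simp
qed

lemma prob_in_eq:
  fixes s :: "real ^ 'n"
  assumes \<gamma>: "0 < \<gamma>"
  shows "prob_in f s A \<gamma> = PP 0 s A \<gamma>"
proof -
  define n where "n = CARD('n)"
  have pt: "sqrt \<gamma> ^ n * noise_density f (sqrt \<gamma> *\<^sub>R x) = hh f 0 n \<gamma> ((norm x)\<^sup>2)" for x :: "real ^ 'n"
  proof -
    have "sqrt \<gamma> ^ n * noise_density f (sqrt \<gamma> *\<^sub>R x)
        = (\<integral>\<sigma>. sqrt \<gamma> ^ n * (indicator {0<..} \<sigma> *\<^sub>R ((2 * pi * \<sigma>\<^sup>2) powr (- real n / 2) *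
             exp (- (norm (sqrt \<gamma> *\<^sub>R x))\<^sup>2 / (2 * \<sigma>\<^sup>2)) * f \<sigma>)) \<partial>lborel)"
      unfolding noise_density_def set_lebesgue_integral_def n_def by (rule integral_mult_right_zero[symmetric])
    also have "\<dots> = hh f 0 n \<gamma> ((norm x)\<^sup>2)"
      unfolding hh_def'
    proof (rule Bochner_Integration.integral_cong[OF refl])
      fix \<sigma> :: real
      show "sqrt \<gamma> ^ n * (indicator {0<..} \<sigma> *\<^sub>R ((2 * pi * \<sigma>\<^sup>2) powr (- real n / 2) *
             exp (- (norm (sqrt \<gamma> *\<^sub>R x))\<^sup>2 / (2 * \<sigma>\<^sup>2)) * f \<sigma>))
          = (2*pi*\<sigma>\<^sup>2) powr (- real n / 2) * Us 0 n \<gamma> ((norm x)\<^sup>2/(2*\<sigma>\<^sup>2)) * f \<sigma>"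
      proof (cases "0 < \<sigma>")
        case False
        then have "f \<sigma> = 0" using fz s1 by force
        then show ?thesis by simp
      next
        case True
        have "norm (sqrt \<gamma> *\<^sub>R x) = sqrt \<gamma> * norm x" using \<gamma> by simp
        then have "(norm (sqrt \<gamma> *\<^sub>R x))\<^sup>2 = (sqrt \<gamma>)\<^sup>2 * (norm x)\<^sup>2" by (simp only: power_mult_distrib)
        then have nx: "(norm (sqrt \<gamma> *\<^sub>R x))\<^sup>2 = \<gamma> * (norm x)\<^sup>2" using \<gamma> by simp
        have "- (\<gamma> * (norm x)\<^sup>2) / (2 * \<sigma>\<^sup>2) = - (\<gamma> * ((norm x)\<^sup>2 / (2 * \<sigma>\<^sup>2)))" by simp
        have nx2: "(sqrt \<gamma> * norm x)\<^sup>2 = \<gamma> * (norm x)\<^sup>2"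
          by (simp only: power_mult_distrib real_sqrt_pow2[OF less_imp_le[OF \<gamma>]])
        then show ?thesis using True \<gamma>
          by (simp add: nx nx2 Us_def Pj_def sqrt_pow_powr)
      qed
    qed
    finally show ?thesis .
  qed
  show ?thesis
    unfolding prob_in_def set_lebesgue_integral_def PP_def
    using pt[of "_ - s"] by (simp add: n_def)
qed

lemma PP2_nonneg:
  fixes s :: "real ^ 'n"
  assumes \<gamma>: "0 < \<gamma>" and d0: "0 \<le> d" and Ad: "\<And>r. r \<in> A \<Longrightarrow> d \<le> dist r s"
    and reg: "(real CARD('n) + sqrt (2 * real CARD('n))) * \<sigma>2\<^sup>2 \<le> \<gamma> * d\<^sup>2"
  shows "0 \<le> PP 2 s A \<gamma>"
  unfolding PP_def
proof (rule integral_nonneg_AE, rule AE_I2)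
  fix r :: "real ^ 'n"
  define n where "n = CARD('n)"
  define \<rho> where "\<rho> = (norm (r - s))\<^sup>2"
  show "0 \<le> indicator A r * hh f 2 CARD('n) \<gamma> ((norm (r - s))\<^sup>2)"
  proof (cases "r \<in> A")
    case True
    have "d \<le> norm (r - s)" using Ad[OF True] by (simp add: dist_norm)
    then have "d\<^sup>2 \<le> \<rho>" using d0 unfolding \<rho>_def by (intro power_mono) auto
    then have g\<rho>: "(real n + sqrt (2 * real n)) * \<sigma>2\<^sup>2 \<le> \<gamma> * \<rho>"
      using reg \<gamma> unfolding n_def by (smt (verit) mult_left_mono)
    have sq: "sqrt (2 * real n) = 2 * sqrt (real n / 2)"
    proof -
      have "sqrt (2 * real n) = sqrt (4 * (real n / 2))" by simp
      also have "\<dots> = sqrt 4 * sqrt (real n / 2)" by (rule real_sqrt_mult)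
      finally show ?thesis by simp
    qed
    have "0 \<le> hh f 2 n \<gamma> \<rho>"
      unfolding hh_def'
    proof (rule integral_nonneg_AE, rule AE_I2)
      fix \<sigma> :: real
      show "0 \<le> (2*pi*\<sigma>\<^sup>2) powr (- real n / 2) * Us 2 n \<gamma> (\<rho>/(2*\<sigma>\<^sup>2)) * f \<sigma>"
      proof (cases "\<sigma> \<in> {\<sigma>1..\<sigma>2}")
        case False then show ?thesis using fz by simp
      next
        case True
        then have sp: "0 < \<sigma>" "\<sigma> \<le> \<sigma>2" using s1 by auto
        have "\<sigma>\<^sup>2 \<le> \<sigma>2\<^sup>2" using sp by (intro power_mono) auto
        then have "(real n + sqrt (2 * real n)) * \<sigma>\<^sup>2 \<le> (real n + sqrt (2 * real n)) * \<sigma>2\<^sup>2"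
          by (intro mult_left_mono) auto
        with g\<rho> have "(real n + sqrt (2 * real n)) * \<sigma>\<^sup>2 \<le> \<gamma> * \<rho>" by linarith
        then have "(real n + sqrt (2 * real n)) / 2 \<le> \<gamma> * (\<rho> / (2 * \<sigma>\<^sup>2))"
          using sp by (simp add: field_simps)
        then have "real n / 2 + sqrt (real n / 2) \<le> \<gamma> * (\<rho> / (2 * \<sigma>\<^sup>2))"
          unfolding sq by simp
        then have "0 \<le> Us 2 n \<gamma> (\<rho> / (2 * \<sigma>\<^sup>2))" by (rule Us2_nonneg[OF \<gamma>])
        then show ?thesis using fnn[of \<sigma>] by simp
      qed
    qed
    then show ?thesis using True by (simp add: \<rho>_def n_def)
  qed simp
qed

lemma nd_meas[measurable]: "noise_density f \<in> borel_measurable borel"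
  unfolding noise_density_def[abs_def] set_lebesgue_integral_def by measurable

lemma prob_UNIV:
  fixes s :: "real ^ 'n"
  assumes \<gamma>: "0 < \<gamma>"
  shows "prob_in f s UNIV \<gamma> = (\<integral>x. noise_density f (x :: real ^ 'n) \<partial>lborel)"
proof -
  define n where "n = CARD('n)"
  define c where "c = 1 / sqrt \<gamma>"
  have c0: "c \<noteq> 0" using \<gamma> by (simp add: c_def)
  define F where "F r = sqrt \<gamma> ^ n * noise_density f (sqrt \<gamma> *\<^sub>R (r - s))" for r :: "real ^ 'n"
  have Fm[measurable]: "F \<in> borel_measurable borel" unfolding F_def[abs_def] by measurable
  have eq: "(lborel :: (real ^ 'n) measure) = density (distr lborel borel (\<lambda>x. s + c *\<^sub>R x)) (\<lambda>_. \<bar>c\<bar> ^ DIM(real ^ 'n))"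
    by (rule lborel_affine[OF c0])
  have "prob_in f s UNIV \<gamma> = integral\<^sup>L lborel F"
    unfolding prob_in_def set_lebesgue_integral_def F_def n_def by simp
  also have "\<dots> = integral\<^sup>L (density (distr lborel borel (\<lambda>x. s + c *\<^sub>R x)) (\<lambda>_. \<bar>c\<bar> ^ DIM(real ^ 'n))) F"
    by (subst eq[symmetric]) (rule refl)
  also have "\<dots> = integral\<^sup>L (distr lborel borel (\<lambda>x. s + c *\<^sub>R x)) (\<lambda>x. \<bar>c\<bar> ^ DIM(real ^ 'n) *\<^sub>R F x)"
    by (rule integral_density) auto
  also have "\<dots> = (\<integral>x. \<bar>c\<bar> ^ DIM(real ^ 'n) *\<^sub>R F (s + c *\<^sub>R (x :: real ^ 'n)) \<partial>lborel)"
    by (rule integral_distr) auto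
  also have "\<dots> = (\<integral>x. noise_density f (x :: real ^ 'n) \<partial>lborel)"
  proof -
    have "\<bar>c\<bar> ^ DIM(real ^ 'n) *\<^sub>R F (s + c *\<^sub>R x) = noise_density f x" for x :: "real ^ 'n"
    proof -
      have "sqrt \<gamma> *\<^sub>R (s + c *\<^sub>R x - s) = x" using \<gamma> by (simp add: c_def)
      moreover have "\<bar>c\<bar> ^ n * sqrt \<gamma> ^ n = 1" using \<gamma>
        by (simp add: c_def power_mult_distrib[symmetric])
      ultimately show ?thesis
        by (simp add: F_def n_def mult.assoc[symmetric])
    qed
    then show ?thesis by simp
  qed
  finally show ?thesis .
qed

lemma PP_split:
  fixes s :: "real ^ 'n"
  assumes A: "A \<in> sets lborel" and \<gamma>: "0 < \<gamma>"
  shows "PP 0 s A \<gamma> = PP 0 s UNIV \<gamma> - PP 0 s (- A) \<gamma>"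
proof -
  define h where "h r = hh f 0 CARD('n) \<gamma> ((norm (r - s))\<^sup>2)" for r :: "real ^ 'n"
  have iA: "integrable lborel (\<lambda>r. indicator A r * h r)"
    using PP_int[OF A \<gamma>, of 0 \<gamma>] \<gamma> by (simp add: h_def)
  have A': "- A \<in> sets lborel" using A by simp
  have iA': "integrable lborel (\<lambda>r. indicator (- A) r * h r)"
    using PP_int[OF A' \<gamma>, of 0 \<gamma>] \<gamma> by (simp add: h_def)
  have "PP 0 s UNIV \<gamma> = (\<integral>r. indicator A r * h r + indicator (- A) r * h r \<partial>lborel)"
    unfolding PP_def h_def by (rule Bochner_Integration.integral_cong) (auto split: split_indicator)
  also have "\<dots> = PP 0 s A \<gamma> + PP 0 s (- A) \<gamma>"
    unfolding PP_def h_def[symmetric] by (rule Bochner_Integration.integral_add[OF iA iA'])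
  finally show ?thesis by simp
qed

end


lemma region_ball:
  fixes c :: "real ^ 'n"
  assumes cc: "center_convex c A" and e: "0 < e" and le: "e \<le> infdist c (frontier A)" and r: "r \<notin> A"
  shows "e \<le> dist r c"
proof (rule ccontr)
  assume "\<not> e \<le> dist r c"
  then have lt: "dist r c < e" by simp
  have fne: "frontier A \<noteq> {}" using e le by (auto simp: infdist_def)
  then have "A \<noteq> {}" by auto
  then obtain x where x: "x \<in> A" by auto
  with cc have "c \<in> A" unfolding center_convex_def by auto
  have "closed_segment c r \<inter> frontier A \<noteq> {}"
  proof (rule connected_Int_frontier)
    show "connected (closed_segment c r)" by simp
    show "closed_segment c r \<inter> A \<noteq> {}" using \<open>c \<in> A\<close> by auto
    show "closed_segment c r - A \<noteq> {}" using r by auto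
  qed
  then obtain z where z: "z \<in> closed_segment c r" "z \<in> frontier A" by auto
  have "dist z c \<le> dist c r" using dist_in_closed_segment[OF z(1)] by simp
  moreover have "infdist c (frontier A) \<le> dist c z" by (rule infdist_le[OF z(2)])
  ultimately show False using lt le by (simp add: dist_commute)
qed

lemma conv_from:
  fixes P QA QB QC :: "real \<Rightarrow> real"
  assumes S: "\<And>\<gamma>. \<gamma> \<in> S \<Longrightarrow> 0 < \<gamma>"
    and eq: "\<And>\<gamma>. 0 < \<gamma> \<Longrightarrow> P \<gamma> = QA \<gamma>"
    and d0: "\<And>\<gamma>. 0 < \<gamma> \<Longrightarrow> (QA has_real_derivative QB \<gamma>) (at \<gamma>)"
    and d1: "\<And>\<gamma>. 0 < \<gamma> \<Longrightarrow> (QB has_real_derivative QC \<gamma>) (at \<gamma>)"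
    and nn: "\<And>\<gamma>. \<gamma> \<in> S \<Longrightarrow> 0 \<le> QC \<gamma>"
  shows "convex_in_regime P S"
proof -
  have "(P has_real_derivative QB \<gamma>) (at \<gamma>) \<and> (QB has_real_derivative QC \<gamma>) (at \<gamma>) \<and> QC \<gamma> \<ge> 0"
    if g: "\<gamma> \<in> S" for \<gamma>
  proof (intro conjI)
    have g0: "0 < \<gamma>" using g by (rule S)
    have ev: "eventually (\<lambda>x. P x = QA x) (nhds \<gamma>)"
      using eventually_nhds_in_open[of "{0<..}" \<gamma>] g0 by (auto elim!: eventually_mono intro: eq)
    show "(P has_real_derivative QB \<gamma>) (at \<gamma>)"
      using DERIV_cong_ev[OF refl ev refl] d0[OF g0] by simp
    show "(QB has_real_derivative QC \<gamma>) (at \<gamma>)" by (rule d1[OF g0])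
    show "0 \<le> QC \<gamma>" by (rule nn[OF g])
  qed
  then show ?thesis unfolding convex_in_regime_def by blast
qed

theorem theorem10:
  fixes f :: "real \<Rightarrow> real" and \<sigma>1 \<sigma>2 :: real
    and M :: nat and \<pi> :: "nat \<Rightarrow> real" and lab :: "nat \<Rightarrow> bool list" and m :: nat
    and s :: "nat \<Rightarrow> real ^ 'n" and \<Omega> :: "nat \<Rightarrow> (real ^ 'n) set"
  assumes "0 < \<sigma>1" and "\<sigma>1 \<le> \<sigma>2"
    and "f \<in> borel_measurable lborel" and "\<And>\<sigma>. f \<sigma> \<ge> 0"
    and "integrable lborel f" and "integral\<^sup>L lborel f = 1"
    and "\<And>\<sigma>. \<sigma> \<notin> {\<sigma>1..\<sigma>2} \<Longrightarrow> f \<sigma> = 0"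
    and "0 < M"
    and "\<And>k. k < M \<Longrightarrow> \<pi> k \<ge> 0" and "(\<Sum>k<M. \<pi> k) = 1"
    and "\<And>k. k < M \<Longrightarrow> length (lab k) = m"
    and "\<And>k. k < M \<Longrightarrow> \<Omega> k \<in> sets lborel"
    and "\<And>i j. i < M \<Longrightarrow> j < M \<Longrightarrow> i \<noteq> j \<Longrightarrow> \<Omega> i \<inter> \<Omega> j = {}"
    and "\<And>k. k < M \<Longrightarrow> center_convex (s k) (\<Omega> k)"
  defines "S \<equiv> {\<gamma>::real. 0 < \<gamma> \<and>
                  (dmin M s \<Omega>)\<^sup>2 \<ge> (real CARD('n) + sqrt (2 * real CARD('n))) * (\<sigma>2\<^sup>2 / \<gamma>)}"
  shows "(\<forall>i<M. \<forall>j<M. i \<noteq> j \<longrightarrow> convex_in_regime (pep f s \<Omega> i j) S)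
         \<and> convex_in_regime (ser f M \<pi> s \<Omega>) S
         \<and> convex_in_regime (ber f M \<pi> lab s \<Omega>) S"
proof -
  have fz: "\<And>\<sigma>. \<sigma> \<notin> {\<sigma>1..\<sigma>2} \<Longrightarrow> f \<sigma> = 0" by (rule assms(7))
  define d where "d = dmin M s \<Omega>"
  define c where "c = real CARD('n) + sqrt (2 * real CARD('n))"
  have PPd: "\<And>(s0::real^'n) A \<gamma> j. A \<in> sets lborel \<Longrightarrow> 0 < \<gamma> \<Longrightarrow> j \<le> 1 \<Longrightarrow>
      ((\<lambda>g. PP f j s0 A g) has_real_derivative PP f (Suc j) s0 A \<gamma>) (at \<gamma>)"
    by (rule PP_deriv[of \<sigma>1 \<sigma>2 f]) (use assms(1-6) fz in auto)
  have PPe: "\<And>(s0::real^'n) A \<gamma>. 0 < \<gamma> \<Longrightarrow> prob_in f s0 A \<gamma> = PP f 0 s0 A \<gamma>"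
    by (rule prob_in_eq[of \<sigma>1 \<sigma>2 f]) (use assms(1-6) fz in auto)
  have PP2: "\<And>(s0::real^'n) A \<gamma> e. 0 < \<gamma> \<Longrightarrow> 0 \<le> e \<Longrightarrow> (\<And>r. r \<in> A \<Longrightarrow> e \<le> dist r s0) \<Longrightarrow>
      c * \<sigma>2\<^sup>2 \<le> \<gamma> * e\<^sup>2 \<Longrightarrow> 0 \<le> PP f 2 s0 A \<gamma>"
    unfolding c_def by (rule PP2_nonneg[of \<sigma>1 \<sigma>2 f]) (use assms(1-6) fz in auto)
  have PPs: "\<And>(s0::real^'n) A \<gamma>. A \<in> sets lborel \<Longrightarrow> 0 < \<gamma> \<Longrightarrow>
      PP f 0 s0 A \<gamma> = PP f 0 s0 UNIV \<gamma> - PP f 0 s0 (- A) \<gamma>"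
    by (rule PP_split[of \<sigma>1 \<sigma>2 f]) (use assms(1-6) fz in auto)
  have PU: "\<And>(s0::real^'n) \<gamma>. 0 < \<gamma> \<Longrightarrow> prob_in f s0 UNIV \<gamma> = (\<integral>x. noise_density f (x::real^'n) \<partial>lborel)"
    by (rule prob_UNIV[of \<sigma>1 \<sigma>2 f]) (use assms(1-6) fz in auto)
  have Sgt: "\<And>\<gamma>. \<gamma> \<in> S \<Longrightarrow> 0 < \<gamma>" by (simp add: S_def)
  have reg: "c * \<sigma>2\<^sup>2 \<le> \<gamma> * d\<^sup>2" if g: "\<gamma> \<in> S" for \<gamma>
  proof -
    have g0: "0 < \<gamma>" and le: "c * (\<sigma>2\<^sup>2 / \<gamma>) \<le> d\<^sup>2" using g by (auto simp: S_def c_def d_def)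
    have "\<gamma> * (c * (\<sigma>2\<^sup>2 / \<gamma>)) \<le> \<gamma> * d\<^sup>2" using le g0 by (intro mult_left_mono) auto
    moreover have "\<gamma> * (c * (\<sigma>2\<^sup>2 / \<gamma>)) = c * \<sigma>2\<^sup>2" using g0 by simp
    ultimately show ?thesis by simp
  qed
  have Mne: "{..<M} \<noteq> {}" using assms(8) by auto
  have d0: "0 \<le> d"
  proof -
    have "d \<in> (\<lambda>k. infdist (s k) (frontier (\<Omega> k))) ` {..<M}"
      unfolding d_def dmin_def by (rule Min_in) (use Mne in auto)
    then show ?thesis by (auto simp: infdist_nonneg)
  qed
  have dle: "d \<le> infdist (s k) (frontier (\<Omega> k))" if "k < M" for k
    unfolding d_def dmin_def by (rule Min_le) (use that in auto)
  have cpos: "0 < c * \<sigma>2\<^sup>2"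
  proof -
    have "0 < real CARD('n)" by simp
    then have "0 < c" unfolding c_def by (smt (verit) real_sqrt_ge_zero)
    moreover have "0 < \<sigma>2" using assms(1,2) by simp
    ultimately show ?thesis by simp
  qed
  have dpos: "0 < d" if "\<gamma> \<in> S" for \<gamma>
  proof -
    have "0 < \<gamma> * d\<^sup>2" using reg[OF that] cpos by linarith
    then have "d \<noteq> 0" by auto
    then show ?thesis using d0 by simp
  qed
  have away: "d \<le> dist r (s k)" if "k < M" "0 < d" "r \<notin> \<Omega> k" for k r
    using region_ball[OF assms(14)[OF that(1)] that(2) dle[OF that(1)] that(3)] .
  have part1: "convex_in_regime (pep f s \<Omega> i j) S" if ij: "i < M" "j < M" "i \<noteq> j" for i j
  proof (rule conv_from[where QA="PP f 0 (s i) (\<Omega> j)" and QB="PP f 1 (s i) (\<Omega> j)" and QC="PP f 2 (s i) (\<Omega> j)"])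
    show "\<And>\<gamma>. \<gamma> \<in> S \<Longrightarrow> 0 < \<gamma>" by (rule Sgt)
    show "pep f s \<Omega> i j \<gamma> = PP f 0 (s i) (\<Omega> j) \<gamma>" if "0 < \<gamma>" for \<gamma>
      unfolding pep_def using PPe[OF that] .
    show "(PP f 0 (s i) (\<Omega> j) has_real_derivative PP f 1 (s i) (\<Omega> j) \<gamma>) (at \<gamma>)" if "0 < \<gamma>" for \<gamma>
      using PPd[OF assms(12)[OF ij(2)] that, of 0] by simp
    show "(PP f 1 (s i) (\<Omega> j) has_real_derivative PP f 2 (s i) (\<Omega> j) \<gamma>) (at \<gamma>)" if "0 < \<gamma>" for \<gamma>
      using PPd[OF assms(12)[OF ij(2)] that, of 1] by (simp add: numeral_2_eq_2)
    show "0 \<le> PP f 2 (s i) (\<Omega> j) \<gamma>" if g: "\<gamma> \<in> S" for \<gamma>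
    proof (rule PP2[OF Sgt[OF g] d0 _ reg[OF g]])
      fix r assume "r \<in> \<Omega> j"
      then have "r \<notin> \<Omega> i" using assms(13)[OF ij] by auto
      then show "d \<le> dist r (s i)" using away[OF ij(1) dpos[OF g]] by simp
    qed
  qed
  define G where "G = (\<integral>x. noise_density f (x::real^'n) \<partial>lborel)"
  have Om': "- \<Omega> i \<in> sets lborel" if "i < M" for i using assms(12)[OF that] by simp
  have part2: "convex_in_regime (ser f M \<pi> s \<Omega>) S"
  proof (rule conv_from[where QA="\<lambda>g. \<Sum>i<M. \<pi> i * (1 - G + PP f 0 (s i) (- \<Omega> i) g)"
        and QB="\<lambda>g. \<Sum>i<M. \<pi> i * PP f 1 (s i) (- \<Omega> i) g"
        and QC="\<lambda>g. \<Sum>i<M. \<pi> i * PP f 2 (s i) (- \<Omega> i) g"])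
    show "\<And>\<gamma>. \<gamma> \<in> S \<Longrightarrow> 0 < \<gamma>" by (rule Sgt)
    show "ser f M \<pi> s \<Omega> \<gamma> = (\<Sum>i<M. \<pi> i * (1 - G + PP f 0 (s i) (- \<Omega> i) \<gamma>))" if g: "0 < \<gamma>" for \<gamma>
      unfolding ser_def
    proof (rule sum.cong[OF refl])
      fix i assume "i \<in> {..<M}"
      then have i: "i < M" by simp
      have "prob_in f (s i) (\<Omega> i) \<gamma> = PP f 0 (s i) UNIV \<gamma> - PP f 0 (s i) (- \<Omega> i) \<gamma>"
        using PPe[OF g] PPs[OF assms(12)[OF i] g] by simp
      also have "PP f 0 (s i) UNIV \<gamma> = G" using PPe[OF g, of "s i" UNIV] PU[OF g, of "s i"] by (simp add: G_def)
      finally show "\<pi> i * (1 - prob_in f (s i) (\<Omega> i) \<gamma>) = \<pi> i * (1 - G + PP f 0 (s i) (- \<Omega> i) \<gamma>)" by simp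
    qed
    show "((\<lambda>g. \<Sum>i<M. \<pi> i * (1 - G + PP f 0 (s i) (- \<Omega> i) g)) has_real_derivative
        (\<Sum>i<M. \<pi> i * PP f 1 (s i) (- \<Omega> i) \<gamma>)) (at \<gamma>)" if g: "0 < \<gamma>" for \<gamma>
    proof (rule DERIV_sum)
      fix i assume "i \<in> {..<M}"
      then have i: "i < M" by simp
      show "((\<lambda>g. \<pi> i * (1 - G + PP f 0 (s i) (- \<Omega> i) g)) has_real_derivative \<pi> i * PP f 1 (s i) (- \<Omega> i) \<gamma>) (at \<gamma>)"
        using DERIV_cmult[OF DERIV_add[OF DERIV_const[of "1 - G"] PPd[OF Om'[OF i] g, of 0]], of "\<pi> i"] by simp
    qed
    show "((\<lambda>g. \<Sum>i<M. \<pi> i * PP f 1 (s i) (- \<Omega> i) g) has_real_derivative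
        (\<Sum>i<M. \<pi> i * PP f 2 (s i) (- \<Omega> i) \<gamma>)) (at \<gamma>)" if g: "0 < \<gamma>" for \<gamma>
    proof (rule DERIV_sum)
      fix i assume "i \<in> {..<M}"
      then have i: "i < M" by simp
      show "((\<lambda>g. \<pi> i * PP f 1 (s i) (- \<Omega> i) g) has_real_derivative \<pi> i * PP f 2 (s i) (- \<Omega> i) \<gamma>) (at \<gamma>)"
        using DERIV_cmult[OF PPd[OF Om'[OF i] g, of 1], of "\<pi> i"] by (simp add: numeral_2_eq_2)
    qed
    show "0 \<le> (\<Sum>i<M. \<pi> i * PP f 2 (s i) (- \<Omega> i) \<gamma>)" if g: "\<gamma> \<in> S" for \<gamma>
    proof (rule sum_nonneg, rule mult_nonneg_nonneg)
      fix i assume "i \<in> {..<M}"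
      then have i: "i < M" by simp
      show "0 \<le> \<pi> i" using assms(9)[OF i] .
      show "0 \<le> PP f 2 (s i) (- \<Omega> i) \<gamma>"
      proof (rule PP2[OF Sgt[OF g] d0 _ reg[OF g]])
        fix r assume "r \<in> - \<Omega> i"
        then show "d \<le> dist r (s i)" using away[OF i dpos[OF g]] by simp
      qed
    qed
  qed
  define w where "w i j = real (hamming (lab i) (lab j)) / log 2 (real M) * \<pi> i" for i j
  have w0: "0 \<le> w i j" if "i < M" for i j
  proof -
    have "0 \<le> log 2 (real M)" using assms(8) by simp
    then show ?thesis using assms(9)[OF that] unfolding w_def by simp
  qed
  have part3: "convex_in_regime (ber f M \<pi> lab s \<Omega>) S"
  proof (rule conv_from[where QA="\<lambda>g. \<Sum>i<M. \<Sum>j\<in>{..<M} - {i}. w i j * PP f 0 (s i) (\<Omega> j) g"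
        and QB="\<lambda>g. \<Sum>i<M. \<Sum>j\<in>{..<M} - {i}. w i j * PP f 1 (s i) (\<Omega> j) g"
        and QC="\<lambda>g. \<Sum>i<M. \<Sum>j\<in>{..<M} - {i}. w i j * PP f 2 (s i) (\<Omega> j) g"])
    show "\<And>\<gamma>. \<gamma> \<in> S \<Longrightarrow> 0 < \<gamma>" by (rule Sgt)
    show "ber f M \<pi> lab s \<Omega> \<gamma> = (\<Sum>i<M. \<Sum>j\<in>{..<M} - {i}. w i j * PP f 0 (s i) (\<Omega> j) \<gamma>)"
      if g: "0 < \<gamma>" for \<gamma>
      unfolding ber_def pep_def w_def using PPe[OF g] by simp
    show "((\<lambda>g. \<Sum>i<M. \<Sum>j\<in>{..<M} - {i}. w i j * PP f 0 (s i) (\<Omega> j) g) has_real_derivative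
        (\<Sum>i<M. \<Sum>j\<in>{..<M} - {i}. w i j * PP f 1 (s i) (\<Omega> j) \<gamma>)) (at \<gamma>)" if g: "0 < \<gamma>" for \<gamma>
    proof (rule DERIV_sum, rule DERIV_sum)
      fix i j assume "i \<in> {..<M}" "j \<in> {..<M} - {i}"
      then have j: "j < M" by simp
      show "((\<lambda>g. w i j * PP f 0 (s i) (\<Omega> j) g) has_real_derivative w i j * PP f 1 (s i) (\<Omega> j) \<gamma>) (at \<gamma>)"
        using DERIV_cmult[OF PPd[OF assms(12)[OF j] g, of 0], of "w i j"] by simp
    qed
    show "((\<lambda>g. \<Sum>i<M. \<Sum>j\<in>{..<M} - {i}. w i j * PP f 1 (s i) (\<Omega> j) g) has_real_derivative
        (\<Sum>i<M. \<Sum>j\<in>{..<M} - {i}. w i j * PP f 2 (s i) (\<Omega> j) \<gamma>)) (at \<gamma>)" if g: "0 < \<gamma>" for \<gamma>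
    proof (rule DERIV_sum, rule DERIV_sum)
      fix i j assume "i \<in> {..<M}" "j \<in> {..<M} - {i}"
      then have j: "j < M" by simp
      show "((\<lambda>g. w i j * PP f 1 (s i) (\<Omega> j) g) has_real_derivative w i j * PP f 2 (s i) (\<Omega> j) \<gamma>) (at \<gamma>)"
        using DERIV_cmult[OF PPd[OF assms(12)[OF j] g, of 1], of "w i j"] by (simp add: numeral_2_eq_2)
    qed
    show "0 \<le> (\<Sum>i<M. \<Sum>j\<in>{..<M} - {i}. w i j * PP f 2 (s i) (\<Omega> j) \<gamma>)" if g: "\<gamma> \<in> S" for \<gamma>
    proof (rule sum_nonneg, rule sum_nonneg, rule mult_nonneg_nonneg)
      fix i j assume "i \<in> {..<M}" "j \<in> {..<M} - {i}"
      then have ij: "i < M" "j < M" "i \<noteq> j" by auto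
      show "0 \<le> w i j" by (rule w0[OF ij(1)])
      show "0 \<le> PP f 2 (s i) (\<Omega> j) \<gamma>"
      proof (rule PP2[OF Sgt[OF g] d0 _ reg[OF g]])
        fix r assume "r \<in> \<Omega> j"
        then have "r \<notin> \<Omega> i" using assms(13)[OF ij] by auto
        then show "d \<le> dist r (s i)" using away[OF ij(1) dpos[OF g]] by simp
      qed
    qed
  qed
  show ?thesis using part1 part2 part3 by blast
qed


end
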